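(* Assume $\mathcal{H}$ is symmetric and complete. Then for every $h\in\mathcal{H}$ and $x\in\mathcal{X}$, the conditional regret of the deferral loss is $$\Delta\mathcal{C}_{\mathsf{L}_{\mathrm{def}},\mathcal{H}}(h,x)=\max\{p_{y_{\max}},p_{n+1}\}-p_{\mathsf{h}},$$ where $p_y=p(x,y)$ for $y\in\mathcal{Y}$, $p_{n+1}=\sum_{y\in\mathcal{Y}}p(x,y)(1-c(x,y))$, $y_{\max}=\operatorname{argmax}_{y\in\mathcal{Y}}p_y$, and $p_{\mathsf{h}}=p_{\mathsf{h}(x)}$ (which equals $p_{n+1}$ when $\mathsf{h}(x)=n+1$).
   Context: Learning to defer: $\mathcal{X}$ input space, $\mathcal{Y}=[n]$, $\overline{\mathcal{Y}}=\{1,\dots,n+1\}$; hypotheses $h\colon\mathcal{X}\times\overline{\mathcal{Y}}\to\mathbb{R}$ with $\mathsf{h}(x)=\operatorname{argmax}_{y\in\overline{\mathcal{Y}}}h(x,y)$ (fixed deterministic tie-breaking); cost $c\colon\mathcal{X}\times\mathcal{Y}\to[0,1]$; deferral loss $\mathsf{L}_{\mathrm{def}}(h,x,y)=1_{\mathsf{h}(x)\neq y}1_{\mathsf{h}(x)\in[n]}+c(x,y)1_{\mathsf{h}(x)=n+1}$. A distribution on $\mathcal{X}\times\mathcal{Y}$ is fixed, with $p(x,y)=\mathbb{P}(Y=y\mid X=x)$. $\mathcal{C}_{\mathsf{L}}(h,x)=\mathbb{E}_{y\mid x}[\mathsf{L}(h,x,y)]$ and $\Delta\mathcal{C}_{\mathsf{L},\mathcal{H}}(h,x)=\mathcal{C}_{\mathsf{L}}(h,x)-\inf_{h'\in\mathcal{H}}\mathcal{C}_{\mathsf{L}}(h',x)$.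 $\mathcal{H}$ is symmetric if there is a family $\mathcal{F}$ of functions $\mathcal{X}\to\mathbb{R}$ with $\{[h(x,1),\dots,h(x,n+1)]:h\in\mathcal{H}\}=\{[f_1(x),\dots,f_{n+1}(x)]:f_i\in\mathcal{F}\}$ for all $x$; complete if $\{h(x,y):h\in\mathcal{H}\}=\mathbb{R}$ for all $(x,y)\in\mathcal{X}\times\mathcal{Y}$. *)

theory Defs
  imports Main "HOL-Analysis.Analysis"
begin

text \<open>Labels: \<Y> = {1..n}, extended label set {1..n+1}, where n+1 means "defer".
  Hypotheses are functions h :: 'x \<Rightarrow> nat \<Rightarrow> real (only values on {1..n+1} matter).\<close>

definition hpred :: "nat \<Rightarrow> ('x \<Rightarrow> nat \<Rightarrow> real) \<Rightarrow> 'x \<Rightarrow> nat" where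
  "hpred n h x = (LEAST y. y \<in> {1..n+1} \<and> (\<forall>y'\<in>{1..n+1}. h x y' \<le> h x y))"

definition Ldef :: "nat \<Rightarrow> ('x \<Rightarrow> nat \<Rightarrow> real) \<Rightarrow> ('x \<Rightarrow> nat \<Rightarrow> real) \<Rightarrow> 'x \<Rightarrow> nat \<Rightarrow> real" where
  "Ldef n c h x y =
     (if hpred n h x \<noteq> y \<and> hpred n h x \<in> {1..n} then 1 else 0)
     + c x y * (if hpred n h x = n + 1 then 1 else 0)"

text \<open>Conditional risk, with p x y = P(Y = y | X = x).\<close>
definition cond_risk :: "nat \<Rightarrow> ('x \<Rightarrow> nat \<Rightarrow> real) \<Rightarrow> ('x \<Rightarrow> nat \<Rightarrow> real)
    \<Rightarrow> ('x \<Rightarrow> nat \<Rightarrow> real) \<Rightarrow> 'x \<Rightarrow> real" where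
  "cond_risk n p c h x = (\<Sum>y\<in>{1..n}. p x y * Ldef n c h x y)"

definition cond_regret :: "nat \<Rightarrow> ('x \<Rightarrow> nat \<Rightarrow> real) \<Rightarrow> ('x \<Rightarrow> nat \<Rightarrow> real)
    \<Rightarrow> ('x \<Rightarrow> nat \<Rightarrow> real) set \<Rightarrow> ('x \<Rightarrow> nat \<Rightarrow> real) \<Rightarrow> 'x \<Rightarrow> real" where
  "cond_regret n p c H h x = cond_risk n p c h x - (INF h'\<in>H. cond_risk n p c h' x)"

definition symmetric_hyp :: "nat \<Rightarrow> ('x \<Rightarrow> nat \<Rightarrow> real) set \<Rightarrow> bool" where
  "symmetric_hyp n H \<longleftrightarrow> (\<exists>F :: ('x \<Rightarrow> real) set. \<forall>x.
     {map (\<lambda>y. h x y) [1..<n+2] | h. h \<in> H}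
     = {map (\<lambda>y. f y x) [1..<n+2] | f. \<forall>y. f y \<in> F})"

definition complete_hyp :: "nat \<Rightarrow> ('x \<Rightarrow> nat \<Rightarrow> real) set \<Rightarrow> bool" where
  "complete_hyp n H \<longleftrightarrow> (\<forall>x. \<forall>y\<in>{1..n}. {h x y | h. h \<in> H} = UNIV)"

end

theory Submission
  imports Defs
begin

lemma hpred_prop:
  "hpred n h x \<in> {1..n+1} \<and> (\<forall>y'\<in>{1..n+1}. h x y' \<le> h x (hpred n h x))"
proof -
  let ?m = "Max (h x ` {1..n+1})"
  have "?m \<in> h x ` {1..n+1}" by (rule Max_in) auto
  then obtain y0 where y0': "?m = h x y0" "y0 \<in> {1..n+1}" by (rule imageE)
  then have y0: "y0 \<in> {1..n+1}" "h x y0 = ?m" by simp_all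
  have "\<forall>y'\<in>{1..n+1}. h x y' \<le> h x y0"
  proof
    fix y' assume "y' \<in> {1..n+1}"
    then have "h x y' \<le> ?m" by (intro Max_ge) auto
    then show "h x y' \<le> h x y0" using y0(2) by simp
  qed
  with y0 have "y0 \<in> {1..n+1} \<and> (\<forall>y'\<in>{1..n+1}. h x y' \<le> h x y0)" by blast
  then show ?thesis unfolding hpred_def by (rule LeastI)
qed

lemma hpred_unique:
  assumes "y0 \<in> {1..n+1}" "\<And>y. y \<in> {1..n+1} \<Longrightarrow> y \<noteq> y0 \<Longrightarrow> h x y < h x y0"
  shows "hpred n h x = y0"
  unfolding hpred_def
proof (rule Least_equality)
  show "y0 \<in> {1..n+1} \<and> (\<forall>y'\<in>{1..n+1}. h x y' \<le> h x y0)"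
    using assms by (metis less_eq_real_def order_refl)
  fix y assume "y \<in> {1..n+1} \<and> (\<forall>y'\<in>{1..n+1}. h x y' \<le> h x y)"
  then show "y0 \<le> y" using assms by (metis not_less order_refl)
qed

lemma risk_eq:
  assumes p_sum: "(\<Sum>y\<in>{1..n}. p x y) = 1"
  shows "cond_risk n p c h x = 1 - (if hpred n h x = n + 1 then (\<Sum>y\<in>{1..n}. p x y * (1 - c x y)) else p x (hpred n h x))"
proof -
  let ?k = "hpred n h x"
  have k: "?k \<in> {1..n+1}" using hpred_prop[of n h x] by (rule conjunct1)
  show ?thesis
  proof (cases "?k = n + 1")
    case True
    have "cond_risk n p c h x = (\<Sum>y\<in>{1..n}. p x y * c x y)"
      unfolding cond_risk_def Ldef_def using True by simp
    also have "\<dots> = (\<Sum>y\<in>{1..n}. p x y) - (\<Sum>y\<in>{1..n}. p x y * (1 - c x y))"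
      by (simp add: sum_subtractf[symmetric] algebra_simps)
    finally show ?thesis using True p_sum by simp
  next
    case False
    then have kn: "?k \<in> {1..n}" using k by auto
    have "cond_risk n p c h x = (\<Sum>y\<in>{1..n}. p x y - (if y = ?k then p x y else 0))"
      unfolding cond_risk_def Ldef_def using False kn by (intro sum.cong) auto
    also have "\<dots> = (\<Sum>y\<in>{1..n}. p x y) - p x ?k"
      using kn by (simp add: sum_subtractf)
    finally show ?thesis using False p_sum by simp
  qed
qed

theorem lemma8:
  fixes n :: nat and p c :: "'x \<Rightarrow> nat \<Rightarrow> real"
    and H :: "('x \<Rightarrow> nat \<Rightarrow> real) set" and h :: "'x \<Rightarrow> nat \<Rightarrow> real" and x :: 'x
  assumes n_pos: "n \<ge> 1"
    and p_nonneg: "\<And>x y. p x y \<ge> 0"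
    and p_sum: "\<And>x. (\<Sum>y\<in>{1..n}. p x y) = 1"
    and c_range: "\<And>x y. 0 \<le> c x y \<and> c x y \<le> 1"
    and sym: "symmetric_hyp n H"
    and compl: "complete_hyp n H"
    and hH: "h \<in> H"
  shows "cond_regret n p c H h x =
    max (Max (p x ` {1..n})) (\<Sum>y\<in>{1..n}. p x y * (1 - c x y))
    - (if hpred n h x = n + 1 then (\<Sum>y\<in>{1..n}. p x y * (1 - c x y)) else p x (hpred n h x))"
proof -
  define pd where "pd = (\<Sum>y\<in>{1..n}. p x y * (1 - c x y))"
  define pm where "pm = Max (p x ` {1..n})"
  define M where "M = max pm pd"
  define ph where "ph = (\<lambda>g. if hpred n g x = n + 1 then pd else p x (hpred n g x))"
  have risk: "cond_risk n p c g x = 1 - ph g" for g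
    using risk_eq[of p x n c g, OF p_sum] unfolding ph_def pd_def by simp
  have le: "ph g \<le> M" for g
  proof -
    have k: "hpred n g x \<in> {1..n+1}" using hpred_prop[of n g x] by (rule conjunct1)
    show ?thesis
    proof (cases "hpred n g x = n + 1")
      case True then show ?thesis unfolding ph_def M_def by simp
    next
      case False
      then have "hpred n g x \<in> {1..n}" using k by auto
      then have "p x (hpred n g x) \<le> pm" unfolding pm_def by (intro Max_ge) auto
      then show ?thesis using False unfolding ph_def M_def by simp
    qed
  qed
  obtain t where t: "t \<in> {1..n+1}" "(if t = n + 1 then pd else p x t) = M"
  proof (cases "pm \<ge> pd")
    case True
    have "pm \<in> p x ` {1..n}" unfolding pm_def using n_pos by (intro Max_in) auto
    then obtain y0 where "y0 \<in> {1..n}" "p x y0 = pm" by auto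
    then show ?thesis using True by (intro that[of y0]) (auto simp: M_def)
  next
    case False
    then show ?thesis by (intro that[of "n+1"]) (auto simp: M_def)
  qed
  \<comment> \<open>realise a hypothesis predicting t\<close>
  obtain F :: "('x \<Rightarrow> real) set" where
    F: "{map (\<lambda>y. h x y) [1..<n+2] | h. h \<in> H} = {map (\<lambda>y. f y x) [1..<n+2] | f. \<forall>y. f y \<in> F}"
    using sym unfolding symmetric_hyp_def by blast
  have Fall: "\<exists>f\<in>F. f x = r" for r
  proof -
    have "r \<in> {g x 1 | g. g \<in> H}" using compl n_pos unfolding complete_hyp_def by auto
    then obtain g where g: "g \<in> H" "g x 1 = r" by auto
    have "map (\<lambda>y. g x y) [1..<n+2] \<in> {map (\<lambda>y. f y x) [1..<n+2] | f. \<forall>y. f y \<in> F}"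
      using F g by blast
    then obtain f where f: "map (\<lambda>y. g x y) [1..<n+2] = map (\<lambda>y. f y x) [1..<n+2]" "\<forall>y. f y \<in> F"
      by blast
    have "1 \<in> set [1..<n+2]" using n_pos by auto
    then have "g x 1 = f 1 x" using f(1) unfolding map_eq_conv by blast
    then show ?thesis using f(2) g by auto
  qed
  define f where "f = (\<lambda>y. SOME f'. f' \<in> F \<and> f' x = (if y = t then 1 else 0))"
  have fF: "f y \<in> F \<and> f y x = (if y = t then 1 else 0)" for y
  proof -
    have "\<exists>f'. f' \<in> F \<and> f' x = (if y = t then 1 else 0)" using Fall[of "if y = t then 1 else 0"] by blast
    then show ?thesis unfolding f_def by (rule someI_ex)
  qed
  have "map (\<lambda>y. f y x) [1..<n+2] \<in> {map (\<lambda>y. h x y) [1..<n+2] | h. h \<in> H}"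
    unfolding F using fF by blast
  then obtain h' where h': "h' \<in> H" "map (\<lambda>y. f y x) [1..<n+2] = map (\<lambda>y. h' x y) [1..<n+2]"
    by blast
  have hv: "h' x y = (if y = t then 1 else 0)" if "y \<in> {1..n+1}" for y
  proof -
    have "y \<in> set [1..<n+2]" using that by auto
    then have "f y x = h' x y" using h'(2) unfolding map_eq_conv by blast
    then show ?thesis using fF[of y] by simp
  qed
  have "hpred n h' x = t"
  proof (rule hpred_unique[OF t(1)])
    fix y assume "y \<in> {1..n+1}" "y \<noteq> t"
    then have "h' x y = 0" "h' x t = 1" using hv[of y] hv[OF t(1)] by simp_all
    then show "h' x y < h' x t" by simp
  qed
  then have pht: "ph h' = M" unfolding ph_def using t(2) by (simp split: if_splits)
  have inf: "(INF g\<in>H. cond_risk n p c g x) = 1 - M"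
  proof (rule cInf_eq_minimum)
    show "1 - M \<in> (\<lambda>g. cond_risk n p c g x) ` H" using h' pht risk by (metis image_eqI)
    fix z assume "z \<in> (\<lambda>g. cond_risk n p c g x) ` H"
    then show "1 - M \<le> z" using risk le by auto
  qed
  show ?thesis
    using risk[of h] unfolding cond_regret_def inf
    by (simp add: M_def pm_def pd_def ph_def)
qed

end
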